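(* Let $n\le l$ be positive integers, let $L_l=\{a_1<\dots<a_l\}$ be the linearly ordered semilattice of $l$ elements, and let $t(X)=s(X)$ be an equation over $L_l$ in the variables $X=\{x_1,\dots,x_n\}$ in which every variable occurs, with solution set $Y=V(t(X)=s(X))$. Then $Y=\bigcup_\sigma Y_\sigma$, the union over all permutations $\sigma$ of $\{1,\dots,n\}$ of the first or second kind, is the decomposition of $Y$ into its irreducible components (i.e. each $Y_\sigma$ is irreducible and $Y_\sigma\not\subseteq Y_{\sigma'}$ for $\sigma\neq\sigma'$). In particular, the number of irreducible components of $Y$ equals the number of permutations of $\{1,\dots,n\}$ of the first and second kind.
   Context: $L_l$ has multiplication $a_ia_j=a_{\min(i,j)}$. A term is a commutative word in $x_1,\dots,x_n$; $\mathrm{Var}(t)$ is the set of variables occurring in $t$. An equation is an ordered pair of terms $t(X)=s(X)$; $P\in L_l^n$ is a solution if $t(P)=s(P)$; $x\le y$ abbreviates $xy=x$. For a system $S$, $V(S)$ is its set of common solutions; $Y\subseteq L_l^n$ is algebraic if $Y=V(S)$ for some system $S$; an algebraic set is irreducible if it is not a proper finite union of other algebraic sets. Every algebraic set is uniquely (up to order) a finite union $Y_1\cup\dots\cup Y_m$ of irreducible algebraic sets with $Y_i\not\subseteq Y_j$ for $i\ne j$; these $Y_i$ are its irreducible components. A permutation $\sigma$ of $\{1,\dots,n\}$ is of the first kind if $x_{\sigma(1)}\in\mathrm{Var}(t)\cap\mathrm{Var}(s)$, and of the second kind if $x_{\sigma(1)}\in\mathrm{Var}(s)\setminus\mathrm{Var}(t)$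 and $x_{\sigma(2)}\in\mathrm{Var}(t)\setminus\mathrm{Var}(s)$. For $\sigma$ of the first kind, $Y_\sigma=V(\{x_{\sigma(i)}\le x_{\sigma(i+1)}:1\le i\le n-1\})$; for $\sigma$ of the second kind, $Y_\sigma=V(\{x_{\sigma(1)}=x_{\sigma(2)}\}\cup\{x_{\sigma(i)}\le x_{\sigma(i+1)}:2\le i\le n-1\})$. *)

theory Defs
  imports "HOL-Library.FuncSet" "HOL-Combinatorics.Permutations"
begin

text \<open>The semilattice L_l = {a_1 < ... < a_l} is represented by the indices {1..l},
  with multiplication a_i a_j = a_(min i j).  A term (commutative word) is a nonempty list of variable
  indices; its value at a point P is the product (= minimum) of the values of its letters.\<close>

type_synonym wterm = "nat list"

definition Var :: "wterm \<Rightarrow> nat set" where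
  "Var t = set t"

definition is_term :: "nat \<Rightarrow> wterm \<Rightarrow> bool" where
  "is_term n t \<longleftrightarrow> t \<noteq> [] \<and> set t \<subseteq> {1..n}"

definition eval_term :: "(nat \<Rightarrow> nat) \<Rightarrow> wterm \<Rightarrow> nat" where
  "eval_term P t = Min (P ` set t)"

definition points :: "nat \<Rightarrow> nat \<Rightarrow> (nat \<Rightarrow> nat) set" where
  "points l n = {1..n} \<rightarrow>\<^sub>E {1..l}"

definition is_equation :: "nat \<Rightarrow> wterm \<times> wterm \<Rightarrow> bool" where
  "is_equation n e \<longleftrightarrow> is_term n (fst e) \<and> is_term n (snd e)"

definition V :: "nat \<Rightarrow> nat \<Rightarrow> (wterm \<times> wterm) set \<Rightarrow> (nat \<Rightarrow> nat) set" where
  "V l n S = {P \<in> points l n. \<forall>e\<in>S. eval_term P (fst e) = eval_term P (snd e)}"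

definition algebraic :: "nat \<Rightarrow> nat \<Rightarrow> (nat \<Rightarrow> nat) set \<Rightarrow> bool" where
  "algebraic l n Y \<longleftrightarrow> (\<exists>S. (\<forall>e\<in>S. is_equation n e) \<and> Y = V l n S)"

definition irreducible :: "nat \<Rightarrow> nat \<Rightarrow> (nat \<Rightarrow> nat) set \<Rightarrow> bool" where
  "irreducible l n Y \<longleftrightarrow> algebraic l n Y \<and>
     (\<forall>F. finite F \<and> (\<forall>Z\<in>F. algebraic l n Z) \<and> Y = \<Union>F \<longrightarrow> Y \<in> F)"

text \<open>x <= y abbreviates the equation x y = x.\<close>
definition leq_eq :: "nat \<Rightarrow> nat \<Rightarrow> wterm \<times> wterm" where
  "leq_eq i j = ([i, j], [i])"

definition first_kind :: "wterm \<Rightarrow> wterm \<Rightarrow> (nat \<Rightarrow> nat) \<Rightarrow> bool" where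
  "first_kind t s \<sigma> \<longleftrightarrow> \<sigma> 1 \<in> Var t \<inter> Var s"

definition second_kind :: "wterm \<Rightarrow> wterm \<Rightarrow> (nat \<Rightarrow> nat) \<Rightarrow> bool" where
  "second_kind t s \<sigma> \<longleftrightarrow> \<sigma> 1 \<in> Var s - Var t \<and> \<sigma> 2 \<in> Var t - Var s"

definition Y_first :: "nat \<Rightarrow> nat \<Rightarrow> (nat \<Rightarrow> nat) \<Rightarrow> (nat \<Rightarrow> nat) set" where
  "Y_first l n \<sigma> = V l n {leq_eq (\<sigma> i) (\<sigma> (i + 1)) | i. 1 \<le> i \<and> i \<le> n - 1}"

definition Y_second :: "nat \<Rightarrow> nat \<Rightarrow> (nat \<Rightarrow> nat) \<Rightarrow> (nat \<Rightarrow> nat) set" where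
  "Y_second l n \<sigma> = V l n ({([\<sigma> 1], [\<sigma> 2])} \<union>
      {leq_eq (\<sigma> i) (\<sigma> (i + 1)) | i. 2 \<le> i \<and> i \<le> n - 1})"

definition Y_sigma :: "nat \<Rightarrow> nat \<Rightarrow> wterm \<Rightarrow> wterm \<Rightarrow> (nat \<Rightarrow> nat) \<Rightarrow> (nat \<Rightarrow> nat) set" where
  "Y_sigma l n t s \<sigma> = (if first_kind t s \<sigma> then Y_first l n \<sigma> else Y_second l n \<sigma>)"

definition kind_perms :: "nat \<Rightarrow> wterm \<Rightarrow> wterm \<Rightarrow> (nat \<Rightarrow> nat) set" where
  "kind_perms n t s = {\<sigma>. \<sigma> permutes {1..n} \<and> (first_kind t s \<sigma> \<or> second_kind t s \<sigma>)}"

end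

theory Submission
  imports Defs
begin

lemma eval_single[simp]: "eval_term P [a] = P a" by (simp add: eval_term_def)
lemma eval_pair[simp]: "eval_term P [a,b] = min (P a) (P b)" by (simp add: eval_term_def)

lemma min_eq_left_iff: "(min (a::nat) b = a) = (a \<le> b)" by (auto simp: min_def)

lemma idx_iff: "\<And>i::nat. (1 \<le> i \<and> i \<le> n - 1) = (1 \<le> i \<and> i < n)"
  and idx_iff2: "\<And>i::nat. (2 \<le> i \<and> i \<le> n - 1) = (2 \<le> i \<and> i < n)" by auto

lemma Y_first_iff: "P \<in> Y_first l n \<sigma> \<longleftrightarrow> P \<in> points l n \<and> (\<forall>i. 1 \<le> i \<and> i < n \<longrightarrow> P (\<sigma> i) \<le> P (\<sigma> (Suc i)))"
proof -
  have "(\<forall>e\<in>{leq_eq (\<sigma> i) (\<sigma> (i + 1)) | i. 1 \<le> i \<and> i \<le> n - 1}. eval_term P (fst e) = eval_term P (snd e))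
     \<longleftrightarrow> (\<forall>i. 1 \<le> i \<and> i \<le> n - 1 \<longrightarrow> eval_term P (fst (leq_eq (\<sigma> i) (\<sigma> (i + 1)))) = eval_term P (snd (leq_eq (\<sigma> i) (\<sigma> (i + 1)))))"
    by blast
  also have "\<dots> \<longleftrightarrow> (\<forall>i. 1 \<le> i \<and> i < n \<longrightarrow> P (\<sigma> i) \<le> P (\<sigma> (Suc i)))"
    by (simp only: idx_iff leq_eq_def fst_conv snd_conv eval_pair eval_single min_eq_left_iff Suc_eq_plus1)
  finally show ?thesis unfolding Y_first_def V_def by blast
qed

lemma Y_second_iff: "P \<in> Y_second l n \<sigma> \<longleftrightarrow> P \<in> points l n \<and> P (\<sigma> 1) = P (\<sigma> 2) \<and> (\<forall>i. 2 \<le> i \<and> i < n \<longrightarrow> P (\<sigma> i) \<le> P (\<sigma> (Suc i)))"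
proof -
  have "(\<forall>e\<in>{leq_eq (\<sigma> i) (\<sigma> (i + 1)) | i. 2 \<le> i \<and> i \<le> n - 1}. eval_term P (fst e) = eval_term P (snd e))
     \<longleftrightarrow> (\<forall>i. 2 \<le> i \<and> i \<le> n - 1 \<longrightarrow> eval_term P (fst (leq_eq (\<sigma> i) (\<sigma> (i + 1)))) = eval_term P (snd (leq_eq (\<sigma> i) (\<sigma> (i + 1)))))"
    by blast
  also have "\<dots> \<longleftrightarrow> (\<forall>i. 2 \<le> i \<and> i < n \<longrightarrow> P (\<sigma> i) \<le> P (\<sigma> (Suc i)))"
    by (simp only: idx_iff2 leq_eq_def fst_conv snd_conv eval_pair eval_single min_eq_left_iff Suc_eq_plus1)
  finally have X: "(\<forall>e\<in>{leq_eq (\<sigma> i) (\<sigma> (i + 1)) | i. 2 \<le> i \<and> i \<le> n - 1}. eval_term P (fst e) = eval_term P (snd e))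
     \<longleftrightarrow> (\<forall>i. 2 \<le> i \<and> i < n \<longrightarrow> P (\<sigma> i) \<le> P (\<sigma> (Suc i)))" .
  show ?thesis unfolding Y_second_def V_def using X by auto
qed

lemma chain_trans:
  fixes P \<sigma> :: "nat \<Rightarrow> nat"
  assumes "\<forall>i. k \<le> i \<and> i < n \<longrightarrow> P (\<sigma> i) \<le> P (\<sigma> (Suc i))"
  shows "k \<le> i \<Longrightarrow> i \<le> j \<Longrightarrow> j \<le> n \<Longrightarrow> P (\<sigma> i) \<le> P (\<sigma> j)"
proof (induction j)
  case 0 then show ?case by simp
next
  case (Suc j)
  show ?case
  proof (cases "i = Suc j")
    case False
    then have "i \<le> j" using Suc by simp
    then have 1: "P (\<sigma> i) \<le> P (\<sigma> j)" using Suc by simp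
    have "P (\<sigma> j) \<le> P (\<sigma> (Suc j))" using assms Suc.prems \<open>i \<le> j\<close> by simp
    then show ?thesis using 1 by simp
  qed simp
qed


definition mono_along :: "(nat \<Rightarrow> nat) \<Rightarrow> (nat \<Rightarrow> nat) \<Rightarrow> nat \<Rightarrow> bool" where
  "mono_along P \<sigma> n \<longleftrightarrow> (\<forall>i j. 1 \<le> i \<longrightarrow> i \<le> j \<longrightarrow> j \<le> n \<longrightarrow> P (\<sigma> i) \<le> P (\<sigma> j))"

lemma perm_mem: "\<sigma> permutes S \<Longrightarrow> x \<in> S \<Longrightarrow> \<sigma> x \<in> S"
  using permutes_in_image[of \<sigma> S x] by blast

lemma perm_inv_mem: "\<sigma> permutes S \<Longrightarrow> x \<in> S \<Longrightarrow> inv \<sigma> x \<in> S"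
  using permutes_in_image[of "inv \<sigma>" S x] permutes_inv[of \<sigma> S] by blast

lemma mono_along_ge:
  assumes perm: "\<sigma> permutes {1..n}" and m: "mono_along P \<sigma> n" and x: "x \<in> {1..n}"
  shows "P (\<sigma> 1) \<le> P x"
proof -
  have "inv \<sigma> x \<in> {1..n}" using perm_inv_mem[OF perm x] .
  then have "P (\<sigma> 1) \<le> P (\<sigma> (inv \<sigma> x))" using m unfolding mono_along_def by auto
  then show ?thesis using permutes_inverses(1)[OF perm] by simp
qed

lemma eval_at_min:
  assumes "y \<in> set u" "set u \<subseteq> {1..n}" "\<forall>x\<in>{1..n}. c \<le> P x" "P y = c"
  shows "eval_term P u = c"
  unfolding eval_term_def using assms by (intro Min_eqI) auto

lemma eval_rank:
  assumes perm: "\<sigma> permutes {1..n}" and m: "mono_along P \<sigma> n" and u: "is_term n u"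
  shows "Min (inv \<sigma> ` set u) \<in> {1..n} \<and> eval_term P u = P (\<sigma> (Min (inv \<sigma> ` set u)))"
proof -
  let ?k = "Min (inv \<sigma> ` set u)"
  have fin: "finite (inv \<sigma> ` set u)" by simp
  have ne: "inv \<sigma> ` set u \<noteq> {}" using u by (simp add: is_term_def)
  have sub: "set u \<subseteq> {1..n}" using u by (simp add: is_term_def)
  have kin: "?k \<in> inv \<sigma> ` set u" using Min_in[OF fin ne] .
  then obtain x0 where x0: "x0 \<in> set u" "?k = inv \<sigma> x0" by blast
  have k1: "?k \<in> {1..n}" using x0 sub perm_inv_mem[OF perm] by auto
  have sk: "\<sigma> ?k = x0" using x0(2) permutes_inverses(1)[OF perm] by simp
  have "eval_term P u = P (\<sigma> ?k)"
    unfolding eval_term_def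
  proof (rule Min_eqI)
    show "finite (P ` set u)" by simp
    show "P (\<sigma> ?k) \<in> P ` set u" using sk x0 by simp
    fix y assume "y \<in> P ` set u"
    then obtain x where x: "x \<in> set u" "y = P x" by blast
    have "?k \<le> inv \<sigma> x" using x fin by simp
    moreover have "inv \<sigma> x \<le> n" using perm_inv_mem[OF perm] x sub by auto
    ultimately have "P (\<sigma> ?k) \<le> P (\<sigma> (inv \<sigma> x))" using m k1 unfolding mono_along_def by auto
    then show "P (\<sigma> ?k) \<le> y" using x permutes_inverses(1)[OF perm] by simp
  qed
  then show ?thesis using k1 by simp
qed

definition P0 :: "nat \<Rightarrow> (nat \<Rightarrow> nat) \<Rightarrow> (nat \<Rightarrow> nat) \<Rightarrow> nat \<Rightarrow> nat" where
  "P0 n g \<sigma> = restrict (\<lambda>x. g (inv \<sigma> x)) {1..n}"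

lemma P0_sigma: "\<sigma> permutes {1..n} \<Longrightarrow> i \<in> {1..n} \<Longrightarrow> P0 n g \<sigma> (\<sigma> i) = g i"
  using perm_mem[of \<sigma> "{1..n}" i] by (simp add: P0_def permutes_inverses(2))

lemma P0_at: "x \<in> {1..n} \<Longrightarrow> P0 n g \<sigma> x = g (inv \<sigma> x)"
  by (simp add: P0_def)

lemma P0_points: "\<sigma> permutes {1..n} \<Longrightarrow> (\<forall>k\<in>{1..n}. g k \<in> {1..l}) \<Longrightarrow> P0 n g \<sigma> \<in> points l n"
  unfolding points_def P0_def restrict_PiE Pi_iff
proof (intro ballI)
  fix x assume "\<sigma> permutes {1..n}" "\<forall>k\<in>{1..n}. g k \<in> {1..l}" "x \<in> {1..n}"
  then show "g (inv \<sigma> x) \<in> {1..l}" using perm_inv_mem[of \<sigma> "{1..n}" x] by blast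
qed

lemma irred_generic:
  assumes perm: "\<sigma> permutes {1..n}"
    and alg: "algebraic l n Y"
    and P0Y: "Q \<in> Y"
    and Ysub: "Y \<subseteq> points l n"
    and mono: "\<forall>P\<in>Y. mono_along P \<sigma> n"
    and eq: "\<forall>a\<in>{1..n}. \<forall>b\<in>{1..n}. Q (\<sigma> a) = Q (\<sigma> b) \<longrightarrow> (\<forall>P\<in>Y. P (\<sigma> a) = P (\<sigma> b))"
  shows "irreducible l n Y"
  unfolding irreducible_def
proof (intro conjI allI impI)
  show "algebraic l n Y" by (rule alg)
  fix F assume F: "finite F \<and> (\<forall>Z\<in>F. algebraic l n Z) \<and> Y = \<Union>F"
  then obtain Z where Z: "Z \<in> F" "Q \<in> Z" using P0Y by blast
  then obtain S where S: "\<forall>e\<in>S. is_equation n e" "Z = V l n S" using F unfolding algebraic_def by blast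
  have "Z \<subseteq> Y" using F Z by blast
  moreover have "Y \<subseteq> Z"
  proof
    fix P assume P: "P \<in> Y"
    have "\<forall>e\<in>S. eval_term P (fst e) = eval_term P (snd e)"
    proof
      fix e assume e: "e \<in> S"
      have t1: "is_term n (fst e)" "is_term n (snd e)" using S e unfolding is_equation_def by auto
      have QZ: "eval_term Q (fst e) = eval_term Q (snd e)" using Z(2) S(2) e unfolding V_def by auto
      have mQ: "mono_along Q \<sigma> n" using mono P0Y by blast
      have mP: "mono_along P \<sigma> n" using mono P by blast
      note a = eval_rank[OF perm mQ t1(1)] and b = eval_rank[OF perm mQ t1(2)]
      note a' = eval_rank[OF perm mP t1(1)] and b' = eval_rank[OF perm mP t1(2)]
      have ka: "Min (inv \<sigma> ` set (fst e)) \<in> {1..n}" using a by blast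
      have kb: "Min (inv \<sigma> ` set (snd e)) \<in> {1..n}" using b by blast
      have "Q (\<sigma> (Min (inv \<sigma> ` set (fst e)))) = Q (\<sigma> (Min (inv \<sigma> ` set (snd e))))" using QZ a b by simp
      then have "P (\<sigma> (Min (inv \<sigma> ` set (fst e)))) = P (\<sigma> (Min (inv \<sigma> ` set (snd e))))"
        by (rule eq[rule_format, OF ka kb _ P])
      then show "eval_term P (fst e) = eval_term P (snd e)" using a' b' by simp
    qed
    then show "P \<in> Z" using P Ysub S(2) unfolding V_def by auto
  qed
  ultimately show "Y \<in> F" using Z by auto
qed

lemma alg_first: assumes perm: "\<sigma> permutes {1..n}" shows "algebraic l n (Y_first l n \<sigma>)"
  unfolding algebraic_def Y_first_def
proof (intro exI conjI)
  show "\<forall>e\<in>{leq_eq (\<sigma> i) (\<sigma> (i + 1)) | i. 1 \<le> i \<and> i \<le> n - 1}. is_equation n e"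
  proof (intro ballI)
    fix e assume "e \<in> {leq_eq (\<sigma> i) (\<sigma> (i + 1)) | i. 1 \<le> i \<and> i \<le> n - 1}"
    then obtain i where i: "1 \<le> i" "i \<le> n - 1" and e: "e = leq_eq (\<sigma> i) (\<sigma> (i + 1))" by blast
    then have "\<sigma> i \<in> {1..n}" "\<sigma> (i+1) \<in> {1..n}" using perm_mem[OF perm] by auto
    then show "is_equation n e" unfolding e
      by (simp add: is_equation_def is_term_def leq_eq_def)
  qed
qed simp

lemma alg_second: assumes perm: "\<sigma> permutes {1..n}" and n2: "2 \<le> n"
  shows "algebraic l n (Y_second l n \<sigma>)"
  unfolding algebraic_def Y_second_def
proof (intro exI conjI)
  show "\<forall>e\<in>{([\<sigma> 1], [\<sigma> 2])} \<union> {leq_eq (\<sigma> i) (\<sigma> (i + 1)) | i. 2 \<le> i \<and> i \<le> n - 1}. is_equation n e"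
  proof (intro ballI)
    fix e assume "e \<in> {([\<sigma> 1], [\<sigma> 2])} \<union> {leq_eq (\<sigma> i) (\<sigma> (i + 1)) | i. 2 \<le> i \<and> i \<le> n - 1}"
    moreover have "\<sigma> 1 \<in> {1..n}" "\<sigma> 2 \<in> {1..n}" using perm_mem[OF perm] n2 by auto
    moreover have "\<And>i. 2 \<le> i \<Longrightarrow> i \<le> n - 1 \<Longrightarrow> is_equation n (leq_eq (\<sigma> i) (\<sigma> (i + 1)))"
    proof -
    fix i assume i: "2 \<le> i" "i \<le> n - 1"
    then have "\<sigma> i \<in> {1..n}" "\<sigma> (i+1) \<in> {1..n}" using perm_mem[OF perm] by auto
    then show "is_equation n (leq_eq (\<sigma> i) (\<sigma> (i + 1)))"
      by (simp add: is_equation_def is_term_def leq_eq_def)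
    qed
    ultimately show "is_equation n e" by (auto simp: is_equation_def is_term_def)
  qed
qed simp

lemma mono_perm_id:
  assumes h: "h permutes {1..n}" and m: "\<forall>i. 1 \<le> i \<and> i < n \<longrightarrow> h i \<le> h (Suc i)"
  shows "\<forall>i\<in>{1..n}. h i = i"
proof -
  have inj: "inj h" using permutes_inj[OF h] .
  have hin: "\<And>i. i \<in> {1..n} \<Longrightarrow> h i \<in> {1..n}" using perm_mem[OF h] .
  have mono2: "\<And>i j. 1 \<le> i \<Longrightarrow> i \<le> j \<Longrightarrow> j \<le> n \<Longrightarrow> h i \<le> h j"
    using chain_trans[of 1 n h id] m by simp
  have strict: "\<And>i j. 1 \<le> i \<Longrightarrow> i < j \<Longrightarrow> j \<le> n \<Longrightarrow> h i < h j"
  proof -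
    fix i j assume "1 \<le> i" "i < j" "j \<le> n"
    then have "h i \<le> h j" using mono2 by simp
    moreover have "h i \<noteq> h j" using inj \<open>i < j\<close> by (simp add: inj_eq)
    ultimately show "h i < h j" by simp
  qed
  have ge: "\<And>i. 1 \<le> i \<Longrightarrow> i \<le> n \<Longrightarrow> i \<le> h i"
  proof -
    fix i show "1 \<le> i \<Longrightarrow> i \<le> n \<Longrightarrow> i \<le> h i"
    proof (induction i)
      case 0 then show ?case by simp
    next
      case (Suc i)
      show ?case
      proof (cases "i = 0")
        case True then show ?thesis using hin[of 1] Suc by auto
      next
        case False
        then have "i \<le> h i" using Suc by simp
        moreover have "h i < h (Suc i)" using strict[of i "Suc i"] Suc False by simp
        ultimately show ?thesis by simp
      qed
    qed
  qed
  have le: "\<And>k i. n - i = k \<Longrightarrow> 1 \<le> i \<Longrightarrow> i \<le> n \<Longrightarrow> h i \<le> i"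
  proof -
    fix k show "\<And>i. n - i = k \<Longrightarrow> 1 \<le> i \<Longrightarrow> i \<le> n \<Longrightarrow> h i \<le> i"
    proof (induction k)
      case 0
      then have "i = n" by simp
      then show ?case using hin[of i] 0 by auto
    next
      case (Suc k)
      then have "n - Suc i = k" "Suc i \<le> n" by auto
      then have "h (Suc i) \<le> Suc i" using Suc by simp
      moreover have "h i < h (Suc i)" using strict[of i "Suc i"] Suc by simp
      ultimately show ?case by simp
    qed
  qed
  show ?thesis
  proof
    fix i assume "i \<in> {1..n}"
    then have "1 \<le> i" "i \<le> n" by auto
    then have "h i \<le> i" by (intro le[OF refl])
    then show "h i = i" using ge[of i] \<open>1 \<le> i\<close> \<open>i \<le> n\<close> by simp
  qed
qed

lemma perm_eq_from_h:
  assumes p: "\<sigma> permutes {1..n}" and p': "\<sigma>' permutes {1..n}"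
    and m: "\<forall>i. 1 \<le> i \<and> i < n \<longrightarrow> inv \<sigma> (\<sigma>' i) \<le> inv \<sigma> (\<sigma>' (Suc i))"
  shows "\<sigma>' = \<sigma>"
proof
  fix x
  have hp: "(inv \<sigma> \<circ> \<sigma>') permutes {1..n}" using permutes_compose[OF p' permutes_inv[OF p]] .
  have hid: "\<forall>i\<in>{1..n}. (inv \<sigma> \<circ> \<sigma>') i = i" using mono_perm_id[OF hp] m by simp
  show "\<sigma>' x = \<sigma> x"
  proof (cases "x \<in> {1..n}")
    case True
    then have "inv \<sigma> (\<sigma>' x) = x" using hid by simp
    then show ?thesis using permutes_inverses(1)[OF p, of "\<sigma>' x"] by simp
  next
    case False
    then show ?thesis using permutes_not_in[OF p] permutes_not_in[OF p'] by simp
  qed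
qed


lemma kind_perm: "\<sigma> \<in> kind_perms n t s \<Longrightarrow> \<sigma> permutes {1..n}"
  by (simp add: kind_perms_def)

lemma kind_cases: "\<sigma> \<in> kind_perms n t s \<Longrightarrow> \<not> first_kind t s \<sigma> \<Longrightarrow> second_kind t s \<sigma>"
  by (simp add: kind_perms_def)

lemma term_sub: "is_term n u \<Longrightarrow> x \<in> Var u \<Longrightarrow> x \<in> {1..n}"
  by (auto simp: is_term_def Var_def)

lemma second_n2:
  assumes p: "\<sigma> permutes {1..n}" and sk: "second_kind t s \<sigma>" and tt: "is_term n t"
  shows "2 \<le> n"
proof -
  have "\<sigma> 2 \<in> {1..n}" using sk term_sub[OF tt] by (auto simp: second_kind_def)
  then have "2 \<in> {1..n}" using permutes_in_image[OF p] by blast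
  then show ?thesis by simp
qed

lemma Ysig_mono:
  assumes k: "\<sigma> \<in> kind_perms n t s" and P: "P \<in> Y_sigma l n t s \<sigma>"
  shows "mono_along P \<sigma> n"
proof -
  have adj: "\<forall>i. 1 \<le> i \<and> i < n \<longrightarrow> P (\<sigma> i) \<le> P (\<sigma> (Suc i))"
  proof (cases "first_kind t s \<sigma>")
    case True
    then show ?thesis using P by (simp add: Y_sigma_def Y_first_iff)
  next
    case False
    then have Y2: "P (\<sigma> 1) = P (\<sigma> 2)" "\<forall>i. 2 \<le> i \<and> i < n \<longrightarrow> P (\<sigma> i) \<le> P (\<sigma> (Suc i))"
      using P by (simp_all add: Y_sigma_def Y_second_iff)
    show ?thesis
    proof (intro allI impI)
      fix i assume i: "1 \<le> i \<and> i < n"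
      show "P (\<sigma> i) \<le> P (\<sigma> (Suc i))"
      proof (cases "i = 1")
        case True
        then show ?thesis using True Y2(1) by (simp add: numeral_2_eq_2)
      next
        case False
        then show ?thesis using Y2(2) i by simp
      qed
    qed
  qed
  show ?thesis unfolding mono_along_def using chain_trans[of 1 n P \<sigma>] adj by blast
qed

lemma Ysig_points: "P \<in> Y_sigma l n t s \<sigma> \<Longrightarrow> P \<in> points l n"
  by (auto simp: Y_sigma_def Y_first_iff Y_second_iff split: if_splits)

lemma Ysig_sub_V:
  assumes tt: "is_term n t" and ss: "is_term n s" and k: "\<sigma> \<in> kind_perms n t s"
    and P: "P \<in> Y_sigma l n t s \<sigma>"
  shows "P \<in> V l n {(t, s)}"
proof -
  have p: "\<sigma> permutes {1..n}" using kind_perm[OF k] .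
  have m: "mono_along P \<sigma> n" using Ysig_mono[OF k P] .
  have ge: "\<forall>x\<in>{1..n}. P (\<sigma> 1) \<le> P x" using mono_along_ge[OF p m] by blast
  have st: "set t \<subseteq> {1..n}" and ss': "set s \<subseteq> {1..n}" using tt ss by (auto simp: is_term_def)
  have "eval_term P t = eval_term P s"
  proof (cases "first_kind t s \<sigma>")
    case True
    then have "\<sigma> 1 \<in> set t" "\<sigma> 1 \<in> set s" by (auto simp: first_kind_def Var_def)
    then show ?thesis using eval_at_min[OF _ st ge] eval_at_min[OF _ ss' ge] by simp
  next
    case False
    then have sk: "second_kind t s \<sigma>" using kind_cases[OF k] by blast
    then have "\<sigma> 1 \<in> set s" "\<sigma> 2 \<in> set t" by (auto simp: second_kind_def Var_def)
    moreover have "P (\<sigma> 2) = P (\<sigma> 1)" using P False by (simp add: Y_sigma_def Y_second_iff)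
    ultimately show ?thesis using eval_at_min[OF _ st ge] eval_at_min[OF _ ss' ge] by simp
  qed
  then show ?thesis using Ysig_points[OF P] unfolding V_def by simp
qed

definition g2 :: "nat \<Rightarrow> nat" where "g2 k = max 1 (k - 1)"

definition Qs :: "nat \<Rightarrow> wterm \<Rightarrow> wterm \<Rightarrow> (nat \<Rightarrow> nat) \<Rightarrow> nat \<Rightarrow> nat" where
  "Qs n t s \<sigma> = (if first_kind t s \<sigma> then P0 n id \<sigma> else P0 n g2 \<sigma>)"

lemma Q_in:
  assumes nl: "n \<le> l" and tt: "is_term n t" and k: "\<sigma> \<in> kind_perms n t s"
  shows "Qs n t s \<sigma> \<in> Y_sigma l n t s \<sigma>"
proof -
  have p: "\<sigma> permutes {1..n}" using kind_perm[OF k] .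
  show ?thesis
  proof (cases "first_kind t s \<sigma>")
    case True
    have pts: "P0 n id \<sigma> \<in> points l n" using P0_points[OF p] nl by auto
    have "\<forall>i. 1 \<le> i \<and> i < n \<longrightarrow> P0 n id \<sigma> (\<sigma> i) \<le> P0 n id \<sigma> (\<sigma> (Suc i))"
      using P0_sigma[OF p] by simp
    then show ?thesis using True pts by (simp add: Qs_def Y_sigma_def Y_first_iff)
  next
    case False
    have n2: "2 \<le> n" using second_n2[OF p kind_cases[OF k False] tt] .
    have "\<forall>k\<in>{1..n}. g2 k \<in> {1..l}" using nl by (auto simp: g2_def)
    then have pts: "P0 n g2 \<sigma> \<in> points l n" using P0_points[OF p] by blast
    have e: "P0 n g2 \<sigma> (\<sigma> 1) = P0 n g2 \<sigma> (\<sigma> 2)" using P0_sigma[OF p] n2 by (simp add: g2_def)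
    have "\<forall>i. 2 \<le> i \<and> i < n \<longrightarrow> P0 n g2 \<sigma> (\<sigma> i) \<le> P0 n g2 \<sigma> (\<sigma> (Suc i))"
      using P0_sigma[OF p] by (simp add: g2_def)
    then show ?thesis using False pts e by (simp add: Qs_def Y_sigma_def Y_second_iff)
  qed
qed

lemma Ysig_irred:
  assumes nl: "n \<le> l" and tt: "is_term n t" and k: "\<sigma> \<in> kind_perms n t s"
  shows "irreducible l n (Y_sigma l n t s \<sigma>)"
proof -
  have p: "\<sigma> permutes {1..n}" using kind_perm[OF k] .
  show ?thesis
  proof (rule irred_generic[OF p _ Q_in[OF nl tt k]])
    show "algebraic l n (Y_sigma l n t s \<sigma>)"
    proof (cases "first_kind t s \<sigma>")
      case True then show ?thesis using alg_first[OF p] by (simp add: Y_sigma_def)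
    next
      case False
      have n2: "2 \<le> n" using second_n2[OF p kind_cases[OF k False] tt] .
      then show ?thesis using False alg_second[OF p n2] by (simp add: Y_sigma_def)
    qed
    show "Y_sigma l n t s \<sigma> \<subseteq> points l n" using Ysig_points by blast
    show "\<forall>P\<in>Y_sigma l n t s \<sigma>. mono_along P \<sigma> n" using Ysig_mono[OF k] by blast
    show "\<forall>a\<in>{1..n}. \<forall>b\<in>{1..n}. Qs n t s \<sigma> (\<sigma> a) = Qs n t s \<sigma> (\<sigma> b) \<longrightarrow>
        (\<forall>P\<in>Y_sigma l n t s \<sigma>. P (\<sigma> a) = P (\<sigma> b))"
    proof (intro ballI impI)
      fix a b P assume a: "a \<in> {1..n}" and b: "b \<in> {1..n}" and q: "Qs n t s \<sigma> (\<sigma> a) = Qs n t s \<sigma> (\<sigma> b)"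
        and P: "P \<in> Y_sigma l n t s \<sigma>"
      show "P (\<sigma> a) = P (\<sigma> b)"
      proof (cases "first_kind t s \<sigma>")
        case True
        then have "a = b" using q P0_sigma[OF p a] P0_sigma[OF p b] by (simp add: Qs_def)
        then show ?thesis by simp
      next
        case False
        then have "g2 a = g2 b" using q P0_sigma[OF p a] P0_sigma[OF p b] by (simp add: Qs_def)
        then have ab: "a = b \<or> (a \<in> {1,2} \<and> b \<in> {1,2})" using a b by (auto simp: g2_def)
        have "P (\<sigma> 1) = P (\<sigma> 2)" using P False by (simp add: Y_sigma_def Y_second_iff)
        then show ?thesis using ab by auto
      qed
    qed
  qed
qed

lemma h_inj:
  assumes p: "\<sigma> permutes S" and p': "\<sigma>' permutes S" and e: "inv \<sigma> (\<sigma>' i) = inv \<sigma> (\<sigma>' j)"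
  shows "i = j"
proof -
  have "\<sigma> (inv \<sigma> (\<sigma>' i)) = \<sigma> (inv \<sigma> (\<sigma>' j))" using e by simp
  then have "\<sigma>' i = \<sigma>' j" using permutes_inverses(1)[OF p] by simp
  then show ?thesis using permutes_inj[OF p'] by (simp add: inj_eq)
qed

lemma Q_unique:
  assumes tt: "is_term n t" and ss: "is_term n s"
    and k: "\<sigma> \<in> kind_perms n t s" and k': "\<sigma>' \<in> kind_perms n t s"
    and Q: "Qs n t s \<sigma> \<in> Y_sigma l n t s \<sigma>'"
  shows "\<sigma>' = \<sigma>"
proof -
  have p: "\<sigma> permutes {1..n}" using kind_perm[OF k] .
  have p': "\<sigma>' permutes {1..n}" using kind_perm[OF k'] .
  have n1: "1 \<le> n" using tt by (cases t) (auto simp: is_term_def)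
  have s'mem: "\<And>i. i \<in> {1..n} \<Longrightarrow> \<sigma>' i \<in> {1..n}" using perm_mem[OF p'] .
  show ?thesis
  proof (cases "first_kind t s \<sigma>")
    case True
    then have Qd: "Qs n t s \<sigma> = P0 n id \<sigma>" by (simp add: Qs_def)
    have Qat: "\<And>x. x \<in> {1..n} \<Longrightarrow> Qs n t s \<sigma> x = inv \<sigma> x" using Qd P0_at by simp
    show ?thesis
    proof (cases "first_kind t s \<sigma>'")
      case True
      then have adj: "\<forall>i. 1 \<le> i \<and> i < n \<longrightarrow> Qs n t s \<sigma> (\<sigma>' i) \<le> Qs n t s \<sigma> (\<sigma>' (Suc i))"
        using Q by (simp add: Y_sigma_def Y_first_iff)
      have "\<forall>i. 1 \<le> i \<and> i < n \<longrightarrow> inv \<sigma> (\<sigma>' i) \<le> inv \<sigma> (\<sigma>' (Suc i))"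
      proof (intro allI impI)
        fix i assume i: "1 \<le> i \<and> i < n"
        then have "\<sigma>' i \<in> {1..n}" "\<sigma>' (Suc i) \<in> {1..n}" using s'mem by auto
        moreover have "Qs n t s \<sigma> (\<sigma>' i) \<le> Qs n t s \<sigma> (\<sigma>' (Suc i))" using adj i by blast
        ultimately show "inv \<sigma> (\<sigma>' i) \<le> inv \<sigma> (\<sigma>' (Suc i))" using Qat[of "\<sigma>' i"] Qat[of "\<sigma>' (Suc i)"] by simp
      qed
      then show ?thesis using perm_eq_from_h[OF p p'] by blast
    next
      case False
      then have sk: "second_kind t s \<sigma>'" using kind_cases[OF k'] by blast
      have e: "Qs n t s \<sigma> (\<sigma>' 1) = Qs n t s \<sigma> (\<sigma>' 2)" using Q False by (simp add: Y_sigma_def Y_second_iff)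
      have m1: "\<sigma>' 1 \<in> {1..n}" "\<sigma>' 2 \<in> {1..n}" using sk term_sub[OF tt] term_sub[OF ss]
        by (auto simp: second_kind_def)
      have "inv \<sigma> (\<sigma>' 1) = inv \<sigma> (\<sigma>' 2)" using e Qat m1 by simp
      then have "(1::nat) = 2" using h_inj[OF p p'] by blast
      then show ?thesis by simp
    qed
  next
    case False
    then have sk: "second_kind t s \<sigma>" using kind_cases[OF k] by blast
    have n2: "2 \<le> n" using second_n2[OF p sk tt] .
    have Qd: "Qs n t s \<sigma> = P0 n g2 \<sigma>" using False by (simp add: Qs_def)
    have Qat: "\<And>x. x \<in> {1..n} \<Longrightarrow> Qs n t s \<sigma> x = g2 (inv \<sigma> x)" using Qd P0_at by simp
    have mQ: "mono_along (Qs n t s \<sigma>) \<sigma>' n" using Ysig_mono[OF k' Q] .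
    have s1: "\<sigma> 1 \<in> {1..n}" using perm_mem[OF p] n1 by simp
    have "Qs n t s \<sigma> (\<sigma>' 1) \<le> Qs n t s \<sigma> (\<sigma> 1)" using mono_along_ge[OF p' mQ s1] .
    also have "\<dots> = 1" using P0_sigma[OF p] n1 Qd by (simp add: g2_def)
    finally have q1: "Qs n t s \<sigma> (\<sigma>' 1) \<le> 1" .
    have m1: "\<sigma>' 1 \<in> {1..n}" "\<sigma>' 2 \<in> {1..n}" using s'mem n2 by auto
    have r1in: "inv \<sigma> (\<sigma>' 1) \<in> {1..n}" using perm_inv_mem[OF p m1(1)] .
    have "g2 (inv \<sigma> (\<sigma>' 1)) \<le> 1" using q1 Qat m1 by simp
    then have r1: "inv \<sigma> (\<sigma>' 1) = 1 \<or> inv \<sigma> (\<sigma>' 1) = 2" using r1in by (auto simp: g2_def)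
    have bk: "\<And>x. \<sigma> (inv \<sigma> x) = x" using permutes_inverses(1)[OF p] .
    have sr1: "\<sigma>' 1 = \<sigma> 1 \<or> \<sigma>' 1 = \<sigma> 2" using r1 bk by metis
    show ?thesis
    proof (cases "first_kind t s \<sigma>'")
      case True
      then show ?thesis using sr1 sk by (auto simp: first_kind_def second_kind_def)
    next
      case False
      then have sk': "second_kind t s \<sigma>'" using kind_cases[OF k'] by blast
      have h1: "inv \<sigma> (\<sigma>' 1) = 1"
      proof -
        have "\<sigma>' 1 \<noteq> \<sigma> 2" using sk sk' by (auto simp: second_kind_def)
        then show ?thesis using r1 bk by metis
      qed
      have e: "Qs n t s \<sigma> (\<sigma>' 1) = Qs n t s \<sigma> (\<sigma>' 2)" using Q False by (simp add: Y_sigma_def Y_second_iff)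
      have r2in: "inv \<sigma> (\<sigma>' 2) \<in> {1..n}" using perm_inv_mem[OF p m1(2)] .
      have "g2 (inv \<sigma> (\<sigma>' 2)) = 1" using e Qat m1 h1 by (simp add: g2_def)
      then have "inv \<sigma> (\<sigma>' 2) \<le> 2" by (auto simp: g2_def)
      moreover have "inv \<sigma> (\<sigma>' 2) \<noteq> 1" using h1 h_inj[OF p p', of 2 1] by auto
      ultimately have h2: "inv \<sigma> (\<sigma>' 2) = 2" using r2in by auto
      have hge2: "\<And>i. i \<in> {1..n} \<Longrightarrow> i \<noteq> 1 \<Longrightarrow> 2 \<le> inv \<sigma> (\<sigma>' i)"
      proof -
        fix i assume i: "i \<in> {1..n}" "i \<noteq> 1"
        have "inv \<sigma> (\<sigma>' i) \<in> {1..n}" using perm_inv_mem[OF p s'mem[OF i(1)]] .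
        moreover have "inv \<sigma> (\<sigma>' i) \<noteq> 1" using h1 h_inj[OF p p', of i 1] i by auto
        ultimately show "2 \<le> inv \<sigma> (\<sigma>' i)" by auto
      qed
      have adj: "\<forall>i. 2 \<le> i \<and> i < n \<longrightarrow> Qs n t s \<sigma> (\<sigma>' i) \<le> Qs n t s \<sigma> (\<sigma>' (Suc i))"
        using Q False by (simp add: Y_sigma_def Y_second_iff)
      have "\<forall>i. 1 \<le> i \<and> i < n \<longrightarrow> inv \<sigma> (\<sigma>' i) \<le> inv \<sigma> (\<sigma>' (Suc i))"
      proof (intro allI impI)
        fix i assume i: "1 \<le> i \<and> i < n"
        have b2: "2 \<le> inv \<sigma> (\<sigma>' (Suc i))" using hge2[of "Suc i"] i by auto
        show "inv \<sigma> (\<sigma>' i) \<le> inv \<sigma> (\<sigma>' (Suc i))"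
        proof (cases "i = 1")
          case True then show ?thesis using h1 b2 by simp
        next
          case False
          then have a2: "2 \<le> inv \<sigma> (\<sigma>' i)" using hge2[of i] i by auto
          have "\<sigma>' i \<in> {1..n}" "\<sigma>' (Suc i) \<in> {1..n}" using s'mem i by auto
          moreover have "Qs n t s \<sigma> (\<sigma>' i) \<le> Qs n t s \<sigma> (\<sigma>' (Suc i))" using adj i False by auto
          ultimately have "g2 (inv \<sigma> (\<sigma>' i)) \<le> g2 (inv \<sigma> (\<sigma>' (Suc i)))" using Qat[of "\<sigma>' i"] Qat[of "\<sigma>' (Suc i)"] by simp
          then show ?thesis using a2 b2 by (simp add: g2_def)
        qed
      qed
      then show ?thesis using perm_eq_from_h[OF p p'] by blast
    qed
  qed
qed


lemma key_le: "(c::nat) \<le> 2 \<Longrightarrow> d \<le> 2 \<Longrightarrow> 3*a + c \<le> 3*b + d \<Longrightarrow> a \<le> b" by arith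

lemma sort_perm:
  fixes key :: "nat \<Rightarrow> nat"
  shows "\<exists>\<sigma>. \<sigma> permutes {1..n} \<and> (\<forall>i j. 1 \<le> i \<longrightarrow> i \<le> j \<longrightarrow> j \<le> n \<longrightarrow> key (\<sigma> i) \<le> key (\<sigma> j))"
proof -
  define xs where "xs = sort_key key [1..<Suc n]"
  have d: "distinct xs" unfolding xs_def by simp
  have st: "set xs = {1..n}" unfolding xs_def by auto
  have len: "length xs = n" unfolding xs_def by simp
  have so: "sorted (map key xs)" unfolding xs_def by simp
  define \<sigma> where "\<sigma> = (\<lambda>i. if i \<in> {1..n} then xs ! (i - 1) else i)"
  have inj: "inj_on \<sigma> {1..n}"
  proof (rule inj_onI)
    fix i j assume ij: "i \<in> {1..n}" "j \<in> {1..n}" "\<sigma> i = \<sigma> j"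
    then have "xs ! (i - 1) = xs ! (j - 1)" "i - 1 < length xs" "j - 1 < length xs"
      unfolding \<sigma>_def using len by auto
    then have "i - 1 = j - 1" using d nth_eq_iff_index_eq by blast
    then show "i = j" using ij by auto
  qed
  have img: "\<sigma> ` {1..n} \<subseteq> {1..n}"
  proof
    fix y assume "y \<in> \<sigma> ` {1..n}"
    then obtain i where i: "i \<in> {1..n}" "y = xs ! (i - 1)" unfolding \<sigma>_def by auto
    then have "i - 1 < length xs" using len by auto
    then show "y \<in> {1..n}" using nth_mem[of "i - 1" xs] st i by auto
  qed
  have bij: "bij_betw \<sigma> {1..n} {1..n}"
    unfolding bij_betw_def using inj endo_inj_surj[OF _ img inj] by simp
  have perm: "\<sigma> permutes {1..n}"
    by (rule bij_imp_permutes[OF bij]) (auto simp: \<sigma>_def)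
  have "\<forall>i j. 1 \<le> i \<longrightarrow> i \<le> j \<longrightarrow> j \<le> n \<longrightarrow> key (\<sigma> i) \<le> key (\<sigma> j)"
  proof (intro allI impI)
    fix i j :: nat assume ij: "1 \<le> i" "i \<le> j" "j \<le> n"
    have "(map key xs) ! (i - 1) \<le> (map key xs) ! (j - 1)"
      using so ij len unfolding sorted_iff_nth_mono by auto
    then show "key (\<sigma> i) \<le> key (\<sigma> j)" using ij len unfolding \<sigma>_def by auto
  qed
  then show ?thesis using perm by blast
qed

lemma perm_first:
  fixes key :: "nat \<Rightarrow> nat"
  assumes perm: "\<sigma> permutes {1..n}"
    and mono: "\<forall>i j. 1 \<le> i \<longrightarrow> i \<le> j \<longrightarrow> j \<le> n \<longrightarrow> key (\<sigma> i) \<le> key (\<sigma> j)"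
    and x0: "x0 \<in> {1..n}" and lt: "\<forall>x\<in>{1..n}. x \<noteq> x0 \<longrightarrow> key x0 < key x"
  shows "\<sigma> 1 = x0"
proof (rule ccontr)
  assume ne: "\<sigma> 1 \<noteq> x0"
  have n1: "1 \<le> n" using x0 by auto
  have s1: "\<sigma> 1 \<in> {1..n}" using perm_mem[OF perm] n1 by auto
  obtain j where j: "j \<in> {1..n}" "\<sigma> j = x0" using x0 permutes_image[OF perm] by (metis imageE)
  have "key (\<sigma> 1) \<le> key x0" using mono j by auto
  moreover have "key x0 < key (\<sigma> 1)" using lt s1 ne by auto
  ultimately show False by simp
qed

lemma perm_second:
  fixes key :: "nat \<Rightarrow> nat"
  assumes perm: "\<sigma> permutes {1..n}"
    and mono: "\<forall>i j. 1 \<le> i \<longrightarrow> i \<le> j \<longrightarrow> j \<le> n \<longrightarrow> key (\<sigma> i) \<le> key (\<sigma> j)"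
    and s1: "\<sigma> 1 = x0" and x1: "x1 \<in> {1..n}" and ne: "x1 \<noteq> x0"
    and lt: "\<forall>x\<in>{1..n}. x \<noteq> x0 \<and> x \<noteq> x1 \<longrightarrow> key x1 < key x"
  shows "\<sigma> 2 = x1"
proof (rule ccontr)
  assume ne2: "\<sigma> 2 \<noteq> x1"
  obtain j where j: "j \<in> {1..n}" "\<sigma> j = x1" using x1 permutes_image[OF perm] by (metis imageE)
  have "j \<noteq> 1" using j s1 ne by auto
  then have j2: "2 \<le> j" using j by auto
  then have s2: "\<sigma> 2 \<in> {1..n}" using perm_mem[OF perm] j by auto
  have "\<sigma> 2 \<noteq> \<sigma> 1" using permutes_inj[OF perm] by (simp add: inj_eq)
  then have "\<sigma> 2 \<noteq> x0" using s1 by simp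
  have "key (\<sigma> 2) \<le> key x1" using mono j j2 by auto
  moreover have "key x1 < key (\<sigma> 2)" using lt s2 ne2 \<open>\<sigma> 2 \<noteq> x0\<close> by auto
  ultimately show False by simp
qed

lemma V_sub:
  assumes tt: "is_term n t" and ss: "is_term n s" and un: "Var t \<union> Var s = {1..n}"
    and P: "P \<in> V l n {(t, s)}"
  shows "\<exists>\<sigma>\<in>kind_perms n t s. P \<in> Y_sigma l n t s \<sigma>"
proof -
  have Pp: "P \<in> points l n" and eq: "eval_term P t = eval_term P s" using P unfolding V_def by auto
  have ft: "finite (P ` set t)" "P ` set t \<noteq> {}" using tt by (auto simp: is_term_def)
  have fs: "finite (P ` set s)" "P ` set s \<noteq> {}" using ss by (auto simp: is_term_def)
  define m where "m = eval_term P t"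
  have ms: "m = eval_term P s" using eq m_def by simp
  obtain a where a: "a \<in> set t" "P a = m" using Min_in[OF ft] unfolding m_def eval_term_def by auto
  obtain b where b: "b \<in> set s" "P b = m" using Min_in[OF fs] unfolding ms eval_term_def by auto
  have le: "\<forall>x\<in>{1..n}. m \<le> P x"
  proof
    fix x assume "x \<in> {1..n}"
    then have "x \<in> set t \<or> x \<in> set s" using un by (auto simp: Var_def)
    then show "m \<le> P x"
    proof
      assume "x \<in> set t" then show ?thesis unfolding m_def eval_term_def using ft by simp
    next
      assume "x \<in> set s" then show ?thesis unfolding ms eval_term_def using fs by simp
    qed
  qed
  have tsub: "set t \<subseteq> {1..n}" "set s \<subseteq> {1..n}" using un by (auto simp: Var_def)
  show ?thesis
  proof (cases "\<exists>x\<in>set t \<inter> set s. P x = m")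
    case True
    then obtain x0 where x0: "x0 \<in> set t" "x0 \<in> set s" "P x0 = m" by blast
    define key where "key = (\<lambda>x. 3 * P x + (if x = x0 then 0 else 2::nat))"
    obtain \<sigma> where p: "\<sigma> permutes {1..n}"
      and mono: "\<forall>i j. 1 \<le> i \<longrightarrow> i \<le> j \<longrightarrow> j \<le> n \<longrightarrow> key (\<sigma> i) \<le> key (\<sigma> j)"
      using sort_perm by blast
    have x0n: "x0 \<in> {1..n}" using x0 tsub by auto
    have "\<forall>x\<in>{1..n}. x \<noteq> x0 \<longrightarrow> key x0 < key x"
    proof (intro ballI impI)
      fix x assume "x \<in> {1..n}" "x \<noteq> x0"
      then have "m \<le> P x" using le by blast
      then show "key x0 < key x" unfolding key_def using x0(3) \<open>x \<noteq> x0\<close> by simp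
    qed
    then have s1: "\<sigma> 1 = x0" using perm_first[OF p mono x0n] by blast
    have fk: "first_kind t s \<sigma>" using s1 x0 by (simp add: first_kind_def Var_def)
    have k: "\<sigma> \<in> kind_perms n t s" using p fk by (simp add: kind_perms_def)
    have "\<forall>i. 1 \<le> i \<and> i < n \<longrightarrow> P (\<sigma> i) \<le> P (\<sigma> (Suc i))"
    proof (intro allI impI)
      fix i assume i: "1 \<le> i \<and> i < n"
      then have "key (\<sigma> i) \<le> key (\<sigma> (Suc i))" using mono by auto
      then show "P (\<sigma> i) \<le> P (\<sigma> (Suc i))" unfolding key_def by (rule key_le[rotated 2]) auto
    qed
    then have "P \<in> Y_sigma l n t s \<sigma>" using fk Pp by (simp add: Y_sigma_def Y_first_iff)
    then show ?thesis using k by blast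
  next
    case False
    then have anots: "a \<notin> set s" and bnott: "b \<notin> set t" using a b by auto
    then have ab: "a \<noteq> b" using a by auto
    define key where "key = (\<lambda>x. 3 * P x + (if x = b then 0 else if x = a then 1 else 2::nat))"
    obtain \<sigma> where p: "\<sigma> permutes {1..n}"
      and mono: "\<forall>i j. 1 \<le> i \<longrightarrow> i \<le> j \<longrightarrow> j \<le> n \<longrightarrow> key (\<sigma> i) \<le> key (\<sigma> j)"
      using sort_perm by blast
    have bn: "b \<in> {1..n}" and an: "a \<in> {1..n}" using a b tsub by auto
    have "\<forall>x\<in>{1..n}. x \<noteq> b \<longrightarrow> key b < key x"
    proof (intro ballI impI)
      fix x assume "x \<in> {1..n}" "x \<noteq> b"
      then have "m \<le> P x" using le by blast
      then show "key b < key x" unfolding key_def using a(2) b(2) \<open>x \<noteq> b\<close> by simp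
    qed
    then have s1: "\<sigma> 1 = b" using perm_first[OF p mono bn] by blast
    have "\<forall>x\<in>{1..n}. x \<noteq> b \<and> x \<noteq> a \<longrightarrow> key a < key x"
    proof (intro ballI impI)
      fix x assume "x \<in> {1..n}" "x \<noteq> b \<and> x \<noteq> a"
      then have "m \<le> P x" using le by blast
      then show "key a < key x" unfolding key_def using a(2) ab \<open>x \<noteq> b \<and> x \<noteq> a\<close> by simp
    qed
    then have s2: "\<sigma> 2 = a" using perm_second[OF p mono s1 an ab] by blast
    have sk: "second_kind t s \<sigma>" using s1 s2 a b anots bnott by (simp add: second_kind_def Var_def)
    have nfk: "\<not> first_kind t s \<sigma>" using s1 bnott by (simp add: first_kind_def Var_def)
    have k: "\<sigma> \<in> kind_perms n t s" using p sk by (simp add: kind_perms_def)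
    have "\<forall>i. 2 \<le> i \<and> i < n \<longrightarrow> P (\<sigma> i) \<le> P (\<sigma> (Suc i))"
    proof (intro allI impI)
      fix i assume i: "2 \<le> i \<and> i < n"
      then have "key (\<sigma> i) \<le> key (\<sigma> (Suc i))" using mono by auto
      then show "P (\<sigma> i) \<le> P (\<sigma> (Suc i))" unfolding key_def by (rule key_le[rotated 2]) auto
    qed
    moreover have "P (\<sigma> 1) = P (\<sigma> 2)" using s1 s2 a b by simp
    ultimately have "P \<in> Y_sigma l n t s \<sigma>" using nfk Pp by (simp add: Y_sigma_def Y_second_iff)
    then show ?thesis using k by blast
  qed
qed

theorem theorem1:
  fixes n l :: nat and t s :: wterm
  assumes "1 \<le> n" and "n \<le> l"
    and "is_term n t" and "is_term n s"
    and "Var t \<union> Var s = {1..n}"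
  shows "V l n {(t, s)} = (\<Union>\<sigma>\<in>kind_perms n t s. Y_sigma l n t s \<sigma>)
    \<and> (\<forall>\<sigma>\<in>kind_perms n t s. irreducible l n (Y_sigma l n t s \<sigma>))
    \<and> (\<forall>\<sigma>\<in>kind_perms n t s. \<forall>\<sigma>'\<in>kind_perms n t s.
          \<sigma> \<noteq> \<sigma>' \<longrightarrow> \<not> Y_sigma l n t s \<sigma> \<subseteq> Y_sigma l n t s \<sigma>')
    \<and> card ((Y_sigma l n t s) ` kind_perms n t s) = card (kind_perms n t s)"
proof (intro conjI)
  show "V l n {(t, s)} = (\<Union>\<sigma>\<in>kind_perms n t s. Y_sigma l n t s \<sigma>)"
  proof
    show "V l n {(t, s)} \<subseteq> (\<Union>\<sigma>\<in>kind_perms n t s. Y_sigma l n t s \<sigma>)"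
    proof
      fix P assume "P \<in> V l n {(t, s)}"
      then obtain \<sigma> where "\<sigma> \<in> kind_perms n t s" "P \<in> Y_sigma l n t s \<sigma>"
        using V_sub[OF assms(3,4,5)] by blast
      then show "P \<in> (\<Union>\<sigma>\<in>kind_perms n t s. Y_sigma l n t s \<sigma>)" by blast
    qed
    show "(\<Union>\<sigma>\<in>kind_perms n t s. Y_sigma l n t s \<sigma>) \<subseteq> V l n {(t, s)}"
    proof
      fix P assume "P \<in> (\<Union>\<sigma>\<in>kind_perms n t s. Y_sigma l n t s \<sigma>)"
      then obtain \<sigma> where "\<sigma> \<in> kind_perms n t s" "P \<in> Y_sigma l n t s \<sigma>" by blast
      then show "P \<in> V l n {(t, s)}" using Ysig_sub_V[OF assms(3,4)] by blast
    qed
  qed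
  show "\<forall>\<sigma>\<in>kind_perms n t s. irreducible l n (Y_sigma l n t s \<sigma>)"
    using Ysig_irred[OF assms(2,3)] by blast
  have dist: "\<And>\<sigma> \<sigma>'. \<sigma> \<in> kind_perms n t s \<Longrightarrow> \<sigma>' \<in> kind_perms n t s \<Longrightarrow> \<sigma> \<noteq> \<sigma>' \<Longrightarrow>
      \<not> Y_sigma l n t s \<sigma> \<subseteq> Y_sigma l n t s \<sigma>'"
  proof -
    fix \<sigma> \<sigma>' assume k: "\<sigma> \<in> kind_perms n t s" and k': "\<sigma>' \<in> kind_perms n t s" and ne: "\<sigma> \<noteq> \<sigma>'"
    show "\<not> Y_sigma l n t s \<sigma> \<subseteq> Y_sigma l n t s \<sigma>'"
    proof
    assume sub: "Y_sigma l n t s \<sigma> \<subseteq> Y_sigma l n t s \<sigma>'"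
    have "Qs n t s \<sigma> \<in> Y_sigma l n t s \<sigma>'" using Q_in[OF assms(2,3) k] sub by blast
    then have "\<sigma>' = \<sigma>" using Q_unique[OF assms(3,4) k k'] by blast
    then show False using ne by simp
    qed
  qed
  then show "\<forall>\<sigma>\<in>kind_perms n t s. \<forall>\<sigma>'\<in>kind_perms n t s.
          \<sigma> \<noteq> \<sigma>' \<longrightarrow> \<not> Y_sigma l n t s \<sigma> \<subseteq> Y_sigma l n t s \<sigma>'" by blast
  have "inj_on (Y_sigma l n t s) (kind_perms n t s)"
  proof (rule inj_onI)
    fix \<sigma> \<sigma>' assume "\<sigma> \<in> kind_perms n t s" "\<sigma>' \<in> kind_perms n t s" "Y_sigma l n t s \<sigma> = Y_sigma l n t s \<sigma>'"
    then show "\<sigma> = \<sigma>'" using dist by blast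
  qed
  then show "card ((Y_sigma l n t s) ` kind_perms n t s) = card (kind_perms n t s)"
    by (rule card_image)
qed

end
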